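(* Let $\Bbbk$ be a field of characteristic $\neq 2$ and let $L$ be a Lie algebra over $\Bbbk$. Let $U_\perp(L)$ be the universal enveloping Lie tri-algebra of $L$ with respect to the functor that sends a Lie tri-algebra $(A,[\cdot\vdash\cdot],[\cdot\dashv\cdot],[\cdot\perp\cdot])$ to the Lie algebra $(A,[\cdot\perp\cdot])$. Let $\dot L$ be an isomorphic copy of $L$ and $\dot L*L$ the free product of Lie algebras. Then $U_\perp(L)$ is isomorphic, as a linear space, to the ideal of $\dot L*L$ generated by $\dot L$.
   Context: A Lie tri-algebra is a vector space with three bilinear operations $[\cdot\vdash\cdot]$, $[\cdot\dashv\cdot]$, $[\cdot\perp\cdot]$ such that $[a\dashv b]=-[b\vdash a]$, $[a\perp b]=-[b\perp a]$, and for all $x_1,x_2,x_3$: $[[x_1\vdash x_2]\vdash x_3]-[x_1\vdash[x_2\vdash x_3]]+[x_2\vdash[x_1\vdash x_3]]=0$; $[[x_1\perp x_2]\vdash x_3]=[[x_1\vdash x_2]\vdash x_3]$; $[[x_1\vdash x_2]\perp x_3]-[x_1\vdash[x_2\perp x_3]]-[[x_1\vdash x_3]\perp x_2]=0$; $[[x_1\perp x_2]\perp x_3]+[[x_2\perp x_3]\perp x_1]+[[x_3\perp x_1]\perp x_2]=0$. The universal enveloping Lie tri-algebra $U_\perp(L)$ is a Lie tri-algebra together with a Lie algebra homomorphism $L\to(U_\perp(L),[\cdot\perp\cdot])$ through which every Lie algebra homomorphism from $L$ to $(A,[\cdot\perp\cdot])$, $A$ a Lie tri-algebra, factors uniquely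 via a Lie tri-algebra homomorphism. *)

theory Defs
  imports Main "HOL.Vector_Spaces" "HOL-Library.Function_Algebras"
begin

text \<open>All vector spaces over the field 'k are represented as subspaces (carriers)
of an ambient abelian group type equipped with a scalar multiplication that makes
the ambient type a 'k-vector space (HOL's vector_space locale).\<close>

definition lin_on :: "('k::field \<Rightarrow> 'a::ab_group_add \<Rightarrow> 'a) \<Rightarrow> ('k \<Rightarrow> 'b::ab_group_add \<Rightarrow> 'b)
    \<Rightarrow> 'a set \<Rightarrow> ('a \<Rightarrow> 'b) \<Rightarrow> bool" where
  "lin_on s1 s2 V f \<longleftrightarrow>
     (\<forall>x\<in>V. \<forall>y\<in>V. f (x + y) = f x + f y) \<and> (\<forall>c. \<forall>x\<in>V. f (s1 c x) = s2 c (f x))"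

definition bilinear_on :: "('k::field \<Rightarrow> 'a::ab_group_add \<Rightarrow> 'a) \<Rightarrow> 'a set \<Rightarrow> ('a \<Rightarrow> 'a \<Rightarrow> 'a) \<Rightarrow> bool" where
  "bilinear_on s V b \<longleftrightarrow>
     (\<forall>x\<in>V. \<forall>y\<in>V. \<forall>z\<in>V. b (x + y) z = b x z + b y z \<and> b x (y + z) = b x y + b x z) \<and>
     (\<forall>c. \<forall>x\<in>V. \<forall>y\<in>V. b (s c x) y = s c (b x y) \<and> b x (s c y) = s c (b x y))"

definition closed_on :: "'a set \<Rightarrow> ('a \<Rightarrow> 'a \<Rightarrow> 'a) \<Rightarrow> bool" where
  "closed_on V b \<longleftrightarrow> (\<forall>x\<in>V. \<forall>y\<in>V. b x y \<in> V)"

definition lie_alg :: "('k::field \<Rightarrow> 'a::ab_group_add \<Rightarrow> 'a) \<Rightarrow> 'a set \<Rightarrow> ('a \<Rightarrow> 'a \<Rightarrow> 'a) \<Rightarrow> bool" where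
  "lie_alg s V b \<longleftrightarrow> vector_space s \<and> module.subspace s V \<and> closed_on V b \<and> bilinear_on s V b \<and>
     (\<forall>x\<in>V. b x x = 0) \<and>
     (\<forall>x\<in>V. \<forall>y\<in>V. \<forall>z\<in>V. b x (b y z) + b y (b z x) + b z (b x y) = 0)"

definition lie_tri :: "('k::field \<Rightarrow> 'a::ab_group_add \<Rightarrow> 'a) \<Rightarrow> 'a set \<Rightarrow>
    ('a \<Rightarrow> 'a \<Rightarrow> 'a) \<Rightarrow> ('a \<Rightarrow> 'a \<Rightarrow> 'a) \<Rightarrow> ('a \<Rightarrow> 'a \<Rightarrow> 'a) \<Rightarrow> bool" where
  "lie_tri s A l r p \<longleftrightarrow> vector_space s \<and> module.subspace s A \<and>
     closed_on A l \<and> closed_on A r \<and> closed_on A p \<and>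
     bilinear_on s A l \<and> bilinear_on s A r \<and> bilinear_on s A p \<and>
     (\<forall>a\<in>A. \<forall>b\<in>A. r a b = - l b a) \<and>
     (\<forall>a\<in>A. \<forall>b\<in>A. p a b = - p b a) \<and>
     (\<forall>x1\<in>A. \<forall>x2\<in>A. \<forall>x3\<in>A.
        l (l x1 x2) x3 - l x1 (l x2 x3) + l x2 (l x1 x3) = 0 \<and>
        l (p x1 x2) x3 = l (l x1 x2) x3 \<and>
        p (l x1 x2) x3 - l x1 (p x2 x3) - p (l x1 x3) x2 = 0 \<and>
        p (p x1 x2) x3 + p (p x2 x3) x1 + p (p x3 x1) x2 = 0)"

definition lie_hom :: "('k::field \<Rightarrow> 'a::ab_group_add \<Rightarrow> 'a) \<Rightarrow> 'a set \<Rightarrow> ('a \<Rightarrow> 'a \<Rightarrow> 'a) \<Rightarrow>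
    ('k \<Rightarrow> 'b::ab_group_add \<Rightarrow> 'b) \<Rightarrow> 'b set \<Rightarrow> ('b \<Rightarrow> 'b \<Rightarrow> 'b) \<Rightarrow> ('a \<Rightarrow> 'b) \<Rightarrow> bool" where
  "lie_hom s1 V1 b1 s2 V2 b2 f \<longleftrightarrow> (\<forall>x\<in>V1. f x \<in> V2) \<and> lin_on s1 s2 V1 f \<and>
     (\<forall>x\<in>V1. \<forall>y\<in>V1. f (b1 x y) = b2 (f x) (f y))"

definition tri_hom :: "('k::field \<Rightarrow> 'a::ab_group_add \<Rightarrow> 'a) \<Rightarrow> 'a set \<Rightarrow>
    ('a \<Rightarrow> 'a \<Rightarrow> 'a) \<Rightarrow> ('a \<Rightarrow> 'a \<Rightarrow> 'a) \<Rightarrow> ('a \<Rightarrow> 'a \<Rightarrow> 'a) \<Rightarrow>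
    ('k \<Rightarrow> 'b::ab_group_add \<Rightarrow> 'b) \<Rightarrow> 'b set \<Rightarrow>
    ('b \<Rightarrow> 'b \<Rightarrow> 'b) \<Rightarrow> ('b \<Rightarrow> 'b \<Rightarrow> 'b) \<Rightarrow> ('b \<Rightarrow> 'b \<Rightarrow> 'b) \<Rightarrow> ('a \<Rightarrow> 'b) \<Rightarrow> bool" where
  "tri_hom s1 A l r p s2 B l' r' p' f \<longleftrightarrow> (\<forall>x\<in>A. f x \<in> B) \<and> lin_on s1 s2 A f \<and>
     (\<forall>x\<in>A. \<forall>y\<in>A. f (l x y) = l' (f x) (f y) \<and> f (r x y) = r' (f x) (f y) \<and>
                   f (p x y) = p' (f x) (f y))"

text \<open>A type of labelled binary trees, used only to name a target type large enough
to contain (a copy of) every Lie (tri-)algebra generated by the image of L.\<close>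
datatype 'x btree = Leaf 'x | Node nat "'x btree" "'x btree"

type_synonym ('l, 'k) big = "('l + 'l) btree \<Rightarrow> 'k"

definition tri_univ_into :: "('k::field \<Rightarrow> 'l::ab_group_add \<Rightarrow> 'l) \<Rightarrow> 'l set \<Rightarrow> ('l \<Rightarrow> 'l \<Rightarrow> 'l) \<Rightarrow>
    ('k \<Rightarrow> 'u::ab_group_add \<Rightarrow> 'u) \<Rightarrow> 'u set \<Rightarrow>
    ('u \<Rightarrow> 'u \<Rightarrow> 'u) \<Rightarrow> ('u \<Rightarrow> 'u \<Rightarrow> 'u) \<Rightarrow> ('u \<Rightarrow> 'u \<Rightarrow> 'u) \<Rightarrow> ('l \<Rightarrow> 'u) \<Rightarrow>
    ('k \<Rightarrow> 'c::ab_group_add \<Rightarrow> 'c) \<Rightarrow> bool" where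
  "tri_univ_into sL L bL sU U l r p i sA \<longleftrightarrow>
     (\<forall>A l' r' p' f. lie_tri sA A l' r' p' \<and> lie_hom sL L bL sA A p' f \<longrightarrow>
        (\<exists>g. tri_hom sU U l r p sA A l' r' p' g \<and> (\<forall>x\<in>L. g (i x) = f x)) \<and>
        (\<forall>g h. tri_hom sU U l r p sA A l' r' p' g \<and> (\<forall>x\<in>L. g (i x) = f x) \<and>
               tri_hom sU U l r p sA A l' r' p' h \<and> (\<forall>x\<in>L. h (i x) = f x) \<longrightarrow>
               (\<forall>u\<in>U. g u = h u)))"

text \<open>Universality is required for targets living in U's own ambient
type and in the large type ('l,'k) big; this is equivalent to universality with
respect to all Lie tri-algebras.\<close>
definition is_univ_env_tri :: "('k::field \<Rightarrow> 'l::ab_group_add \<Rightarrow> 'l) \<Rightarrow> 'l set \<Rightarrow> ('l \<Rightarrow> 'l \<Rightarrow> 'l) \<Rightarrow>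
    ('k \<Rightarrow> 'u::ab_group_add \<Rightarrow> 'u) \<Rightarrow> 'u set \<Rightarrow>
    ('u \<Rightarrow> 'u \<Rightarrow> 'u) \<Rightarrow> ('u \<Rightarrow> 'u \<Rightarrow> 'u) \<Rightarrow> ('u \<Rightarrow> 'u \<Rightarrow> 'u) \<Rightarrow> ('l \<Rightarrow> 'u) \<Rightarrow> bool" where
  "is_univ_env_tri sL L bL sU U l r p i \<longleftrightarrow>
     lie_alg sL L bL \<and> lie_tri sU U l r p \<and> lie_hom sL L bL sU U p i \<and>
     (\<forall>sA :: 'k \<Rightarrow> 'u \<Rightarrow> 'u. tri_univ_into sL L bL sU U l r p i sA) \<and>
     (\<forall>sA :: 'k \<Rightarrow> ('l, 'k) big \<Rightarrow> ('l, 'k) big. tri_univ_into sL L bL sU U l r p i sA)"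

definition coprod_into :: "('k::field \<Rightarrow> 'l::ab_group_add \<Rightarrow> 'l) \<Rightarrow> 'l set \<Rightarrow> ('l \<Rightarrow> 'l \<Rightarrow> 'l) \<Rightarrow>
    ('k \<Rightarrow> 'f::ab_group_add \<Rightarrow> 'f) \<Rightarrow> 'f set \<Rightarrow> ('f \<Rightarrow> 'f \<Rightarrow> 'f) \<Rightarrow> ('l \<Rightarrow> 'f) \<Rightarrow> ('l \<Rightarrow> 'f) \<Rightarrow>
    ('k \<Rightarrow> 'c::ab_group_add \<Rightarrow> 'c) \<Rightarrow> bool" where
  "coprod_into sL L bL sF F bF j1 j2 sM \<longleftrightarrow>
     (\<forall>M bM g1 g2. lie_alg sM M bM \<and> lie_hom sL L bL sM M bM g1 \<and> lie_hom sL L bL sM M bM g2 \<longrightarrow>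
        (\<exists>h. lie_hom sF F bF sM M bM h \<and> (\<forall>x\<in>L. h (j1 x) = g1 x \<and> h (j2 x) = g2 x)) \<and>
        (\<forall>h h'. lie_hom sF F bF sM M bM h \<and> (\<forall>x\<in>L. h (j1 x) = g1 x \<and> h (j2 x) = g2 x) \<and>
                lie_hom sF F bF sM M bM h' \<and> (\<forall>x\<in>L. h' (j1 x) = g1 x \<and> h' (j2 x) = g2 x) \<longrightarrow>
                (\<forall>u\<in>F. h u = h' u)))"

text \<open>(F, bF) with j1 : L-dot -> F (L-dot an isomorphic copy of L, identified with L)
and j2 : L -> F is the free product L-dot * L of Lie algebras.\<close>
definition is_free_product :: "('k::field \<Rightarrow> 'l::ab_group_add \<Rightarrow> 'l) \<Rightarrow> 'l set \<Rightarrow> ('l \<Rightarrow> 'l \<Rightarrow> 'l) \<Rightarrow>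
    ('k \<Rightarrow> 'f::ab_group_add \<Rightarrow> 'f) \<Rightarrow> 'f set \<Rightarrow> ('f \<Rightarrow> 'f \<Rightarrow> 'f) \<Rightarrow> ('l \<Rightarrow> 'f) \<Rightarrow> ('l \<Rightarrow> 'f) \<Rightarrow> bool" where
  "is_free_product sL L bL sF F bF j1 j2 \<longleftrightarrow>
     lie_alg sL L bL \<and> lie_alg sF F bF \<and> lie_hom sL L bL sF F bF j1 \<and> lie_hom sL L bL sF F bF j2 \<and>
     (\<forall>sM :: 'k \<Rightarrow> 'f \<Rightarrow> 'f. coprod_into sL L bL sF F bF j1 j2 sM) \<and>
     (\<forall>sM :: 'k \<Rightarrow> ('l, 'k) big \<Rightarrow> ('l, 'k) big. coprod_into sL L bL sF F bF j1 j2 sM)"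

definition lie_ideal_gen :: "('k::field \<Rightarrow> 'f::ab_group_add \<Rightarrow> 'f) \<Rightarrow> 'f set \<Rightarrow> ('f \<Rightarrow> 'f \<Rightarrow> 'f) \<Rightarrow> 'f set \<Rightarrow> 'f set" where
  "lie_ideal_gen sF F bF X =
     \<Inter>{I. module.subspace sF I \<and> I \<subseteq> F \<and> X \<subseteq> I \<and> (\<forall>x\<in>F. \<forall>y\<in>I. bF x y \<in> I)}"

end

theory Submission imports Defs "HOL-Library.Product_Plus" begin

lemma vs_fun: "vector_space (\<lambda>(c::'k::field) (f::'x \<Rightarrow> 'k). \<lambda>x. c * f x)"
  by unfold_locales (auto simp: algebra_simps plus_fun_def)

lemma emb_exists:
  fixes s :: "'k::field \<Rightarrow> 'a::ab_group_add \<Rightarrow> 'a" and ev :: "'x \<Rightarrow> 'a"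
  assumes vs: "vector_space s" and V: "V \<subseteq> module.span s (ev ` X)"
  shows "\<exists>E :: 'a \<Rightarrow> 'x \<Rightarrow> 'k. lin_on s (\<lambda>c f x. c * f x) V E \<and> inj_on E V"
proof -
  interpret vector_space s by fact
  obtain B where B: "B \<subseteq> ev ` X" "independent B" "ev ` X \<subseteq> span B"
    using maximal_independent_subset by blast
  have sp: "V \<subseteq> span B" using V span_minimal[OF B(3)] by auto
  define g where "g = inv_into X ev"
  define E where "E v = (\<lambda>x. if x \<in> g ` B then representation B v (ev x) else 0)" for v
  have evg: "ev (g b) = b" if "b \<in> B" for b using B(1) that unfolding g_def
    by (meson f_inv_into_f subsetD)
  have Eg: "E v (g b) = representation B v b" if "b \<in> B" for b v
    using that evg by (auto simp: E_def)
  have lin: "lin_on s (\<lambda>c f x. c * f x) V E"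
    unfolding lin_on_def
  proof safe
    fix x y assume "x \<in> V" "y \<in> V"
    then have "x \<in> span B" "y \<in> span B" using sp by auto
    then show "E (x + y) = E x + E y"
      using B(2) by (auto simp: E_def plus_fun_def representation_add)
  next
    fix c x assume "x \<in> V"
    then have "x \<in> span B" using sp by auto
    then show "E (s c x) = (\<lambda>xa. c * E x xa)"
      using B(2) by (auto simp: E_def representation_scale)
  qed
  have "inj_on E V"
  proof (rule inj_onI)
    fix v w assume v: "v \<in> V" and w: "w \<in> V" and eq: "E v = E w"
    have "representation B v = representation B w"
    proof
      fix b show "representation B v b = representation B w b"
      proof (cases "b \<in> B")
        case True then show ?thesis using Eg[of b v] Eg[of b w] eq by metis
      next
        case False then show ?thesis using representation_ne_zero by metis
      qed
    qed
    then show "v = w"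
      using sum_nonzero_representation_eq[OF B(2), of v] sum_nonzero_representation_eq[OF B(2), of w]
        v w sp by auto
  qed
  with lin show ?thesis by blast
qed

locale vsub = vector_space s for s :: "'k::field \<Rightarrow> 'a::ab_group_add \<Rightarrow> 'a" +
  fixes V assumes sub: "subspace V"
begin
lemma V0[simp,intro]: "0 \<in> V" using sub by (simp add: subspace_def)
lemma Vadd[simp,intro]: "x \<in> V \<Longrightarrow> y \<in> V \<Longrightarrow> x + y \<in> V" using sub by (simp add: subspace_def)
lemma Vsc[simp,intro]: "x \<in> V \<Longrightarrow> s c x \<in> V" using sub by (simp add: subspace_def)
lemma Vneg[simp,intro]: "x \<in> V \<Longrightarrow> - x \<in> V" using sub by (simp add: subspace_neg)
lemma Vdiff[simp,intro]: "x \<in> V \<Longrightarrow> y \<in> V \<Longrightarrow> x - y \<in> V" using sub by (simp add: subspace_diff)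
end

locale bil = vsub s V for s :: "'k::field \<Rightarrow> 'a::ab_group_add \<Rightarrow> 'a" and V +
  fixes b assumes bil: "bilinear_on s V b" and cl: "closed_on V b"
begin
lemma bV[simp,intro]: "x \<in> V \<Longrightarrow> y \<in> V \<Longrightarrow> b x y \<in> V" using cl by (simp add: closed_on_def)
lemma add1[simp]: "x \<in> V \<Longrightarrow> y \<in> V \<Longrightarrow> z \<in> V \<Longrightarrow> b (x + y) z = b x z + b y z"
  using bil by (simp add: bilinear_on_def)
lemma add2[simp]: "x \<in> V \<Longrightarrow> y \<in> V \<Longrightarrow> z \<in> V \<Longrightarrow> b x (y + z) = b x y + b x z"
  using bil by (simp add: bilinear_on_def)
lemma sc1[simp]: "x \<in> V \<Longrightarrow> y \<in> V \<Longrightarrow> b (s c x) y = s c (b x y)"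
  using bil by (simp add: bilinear_on_def)
lemma sc2[simp]: "x \<in> V \<Longrightarrow> y \<in> V \<Longrightarrow> b x (s c y) = s c (b x y)"
  using bil by (simp add: bilinear_on_def)
lemma zero1[simp]: "x \<in> V \<Longrightarrow> b 0 x = 0"
  using add1[of 0 0 x] by simp
lemma zero2[simp]: "x \<in> V \<Longrightarrow> b x 0 = 0"
  using add2[of x 0 0] by simp
lemma neg1[simp]: "x \<in> V \<Longrightarrow> y \<in> V \<Longrightarrow> b (- x) y = - b x y"
  using add1[of "-x" x y] by (simp add: eq_neg_iff_add_eq_0)
lemma neg2[simp]: "x \<in> V \<Longrightarrow> y \<in> V \<Longrightarrow> b x (- y) = - b x y"
  using add2[of x "-y" y] by (simp add: eq_neg_iff_add_eq_0)
lemma diff1[simp]: "x \<in> V \<Longrightarrow> y \<in> V \<Longrightarrow> z \<in> V \<Longrightarrow> b (x - y) z = b x z - b y z"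
  using add1[of x "-y" z] by (simp del: add1)
lemma diff2[simp]: "x \<in> V \<Longrightarrow> y \<in> V \<Longrightarrow> z \<in> V \<Longrightarrow> b x (y - z) = b x y - b x z"
  using add2[of x y "-z"] by (simp del: add2)
end

locale lieA = bil s V b for s :: "'k::field \<Rightarrow> 'a::ab_group_add \<Rightarrow> 'a" and V b +
  assumes alt: "\<And>x. x \<in> V \<Longrightarrow> b x x = 0"
    and jac: "\<And>x y z. x \<in> V \<Longrightarrow> y \<in> V \<Longrightarrow> z \<in> V \<Longrightarrow> b x (b y z) + b y (b z x) + b z (b x y) = 0"
begin
lemma anti: "x \<in> V \<Longrightarrow> y \<in> V \<Longrightarrow> b x y = - b y x"
  using alt[of "x+y"] alt[of x] alt[of y] by (simp add: eq_neg_iff_add_eq_0 add.commute)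
lemma jac2: "x \<in> V \<Longrightarrow> y \<in> V \<Longrightarrow> z \<in> V \<Longrightarrow> b (b x y) z = b x (b y z) - b y (b x z)"
  using jac[of x y z] anti[of z "b x y"] anti[of z x] by (simp add: algebra_simps eq_neg_iff_add_eq_0)
end

lemma lieA_iff: "lie_alg s V b \<longleftrightarrow> lieA s V b"
  unfolding lie_alg_def lieA_def bil_def vsub_def bil_axioms_def vsub_axioms_def lieA_axioms_def
  by blast

lemma h1: "(a::'a::ab_group_add) - b + c = 0 \<Longrightarrow> a = b - c"
  by (simp add: algebra_simps eq_diff_eq diff_eq_eq)
lemma h3: "(a::'a::ab_group_add) - b - c = 0 \<Longrightarrow> a = b + c" by (simp add: diff_diff_eq)
lemma h3b: "(a::'a::ab_group_add) - b - c = 0 \<Longrightarrow> b = a - c" by (simp add: algebra_simps)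
lemma h4: "(a::'a::ab_group_add) + b + c = 0 \<Longrightarrow> a = - b - c" by (simp add: algebra_simps eq_neg_iff_add_eq_0)

locale triA = Lb: bil s A l + Rb: bil s A r + Pb: bil s A p
  for s :: "'k::field \<Rightarrow> 'a::ab_group_add \<Rightarrow> 'a" and A l r p +
  assumes rl0: "\<forall>a\<in>A. \<forall>b\<in>A. r a b = - l b a"
    and pa0: "\<forall>a\<in>A. \<forall>b\<in>A. p a b = - p b a"
    and axs: "\<forall>x1\<in>A. \<forall>x2\<in>A. \<forall>x3\<in>A.
        l (l x1 x2) x3 - l x1 (l x2 x3) + l x2 (l x1 x3) = 0 \<and>
        l (p x1 x2) x3 = l (l x1 x2) x3 \<and>
        p (l x1 x2) x3 - l x1 (p x2 x3) - p (l x1 x3) x2 = 0 \<and>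
        p (p x1 x2) x3 + p (p x2 x3) x1 + p (p x3 x1) x2 = 0"
begin
lemma rl: "a \<in> A \<Longrightarrow> b \<in> A \<Longrightarrow> r a b = - l b a" using rl0 by blast
lemma pa: "a \<in> A \<Longrightarrow> b \<in> A \<Longrightarrow> p a b = - p b a" using pa0 by blast
lemma ax1: "x1 \<in> A \<Longrightarrow> x2 \<in> A \<Longrightarrow> x3 \<in> A \<Longrightarrow>
       l (l x1 x2) x3 - l x1 (l x2 x3) + l x2 (l x1 x3) = 0" using axs by blast
lemma ax2: "x1 \<in> A \<Longrightarrow> x2 \<in> A \<Longrightarrow> x3 \<in> A \<Longrightarrow>
       l (p x1 x2) x3 = l (l x1 x2) x3" using axs by blast
lemma ax3: "x1 \<in> A \<Longrightarrow> x2 \<in> A \<Longrightarrow> x3 \<in> A \<Longrightarrow>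
       p (l x1 x2) x3 - l x1 (p x2 x3) - p (l x1 x3) x2 = 0" using axs by blast
lemma ax4: "x1 \<in> A \<Longrightarrow> x2 \<in> A \<Longrightarrow> x3 \<in> A \<Longrightarrow>
       p (p x1 x2) x3 + p (p x2 x3) x1 + p (p x3 x1) x2 = 0" using axs by blast
lemma ax1': "x1 \<in> A \<Longrightarrow> x2 \<in> A \<Longrightarrow> x3 \<in> A \<Longrightarrow> l (l x1 x2) x3 = l x1 (l x2 x3) - l x2 (l x1 x3)"
  using ax1[of x1 x2 x3] by (rule h1)
lemma ax3': "x1 \<in> A \<Longrightarrow> x2 \<in> A \<Longrightarrow> x3 \<in> A \<Longrightarrow> p (l x1 x2) x3 = l x1 (p x2 x3) + p (l x1 x3) x2"
  using ax3[of x1 x2 x3] by (rule h3)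
lemma ax4': "x1 \<in> A \<Longrightarrow> x2 \<in> A \<Longrightarrow> x3 \<in> A \<Longrightarrow> p (p x1 x2) x3 = - p (p x2 x3) x1 - p (p x3 x1) x2"
  using ax4[of x1 x2 x3] by (rule h4)
lemma der: "x1 \<in> A \<Longrightarrow> x2 \<in> A \<Longrightarrow> x3 \<in> A \<Longrightarrow> l x1 (p x2 x3) = p (l x1 x2) x3 - p (l x1 x3) x2"
  using ax3[of x1 x2 x3] by (rule h3b)
end

lemma triA_iff: "lie_tri s A l r p \<longleftrightarrow> triA s A l r p"
  unfolding lie_tri_def triA_def bil_def vsub_def bil_axioms_def vsub_axioms_def triA_axioms_def
  by (intro iffI; elim conjE; intro conjI; assumption)

locale iso = V1: vsub s1 A + vs2: vector_space s2
  for s1 :: "'k::field \<Rightarrow> 'a::ab_group_add \<Rightarrow> 'a" and A and s2 :: "'k \<Rightarrow> 'b::ab_group_add \<Rightarrow> 'b" +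
  fixes E assumes lin: "lin_on s1 s2 A E" and inj: "inj_on E A"
begin
definition "Ei = inv_into A E"
lemma E_add[simp]: "x \<in> A \<Longrightarrow> y \<in> A \<Longrightarrow> E (x + y) = E x + E y" using lin by (simp add: lin_on_def)
lemma E_sc[simp]: "x \<in> A \<Longrightarrow> E (s1 c x) = s2 c (E x)" using lin by (simp add: lin_on_def)
lemma E_0[simp]: "E 0 = 0" using E_add[of 0 0] by simp
lemma E_neg[simp]: "x \<in> A \<Longrightarrow> E (- x) = - E x" using E_add[of x "-x"] by (simp add: eq_neg_iff_add_eq_0 add.commute)
lemma E_diff[simp]: "x \<in> A \<Longrightarrow> y \<in> A \<Longrightarrow> E (x - y) = E x - E y" using E_add[of x "-y"] by (simp del: E_add)
lemma Ei_E[simp]: "x \<in> A \<Longrightarrow> Ei (E x) = x" using inj by (simp add: Ei_def)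
lemma E_Ei[simp]: "y \<in> E ` A \<Longrightarrow> E (Ei y) = y" by (simp add: Ei_def f_inv_into_f)
lemma Ei_in[simp,intro]: "y \<in> E ` A \<Longrightarrow> Ei y \<in> A" by (simp add: Ei_def inv_into_into)
lemma sub2: "vs2.subspace (E ` A)"
  unfolding vs2.subspace_def
proof (intro conjI ballI allI)
  show "0 \<in> E ` A" using E_0 V1.V0 by (metis image_eqI)
  show "x + y \<in> E ` A" if "x \<in> E ` A" "y \<in> E ` A" for x y
    using that by (auto simp del: E_add simp: E_add[symmetric])
  show "s2 c x \<in> E ` A" if "x \<in> E ` A" for x c
    using that by (auto simp del: E_sc simp: E_sc[symmetric])
qed
lemma vsub2: "vsub s2 (E ` A)" by (simp add: vsub_def vsub_axioms_def sub2 vs2.vector_space_axioms)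
lemma Ei_add[simp]: "x \<in> E ` A \<Longrightarrow> y \<in> E ` A \<Longrightarrow> Ei (x + y) = Ei x + Ei y"
  by (auto simp del: E_add simp: E_add[symmetric])
lemma Ei_sc[simp]: "x \<in> E ` A \<Longrightarrow> Ei (s2 c x) = s1 c (Ei x)"
  by (auto simp del: E_sc simp: E_sc[symmetric])
lemma lin2: "lin_on s2 s1 (E ` A) Ei" by (simp add: lin_on_def)

lemma bil_tr: "bil s1 A b \<Longrightarrow> bil s2 (E ` A) (\<lambda>x y. E (b (Ei x) (Ei y)))"
  unfolding bil_def bil_axioms_def using vsub2
  by (auto simp: bilinear_on_def closed_on_def bil.add1 bil.add2 bil.sc1 bil.sc2 bil.bV vsub_def)

lemma lie_tr: assumes "lieA s1 A b" shows "lieA s2 (E ` A) (\<lambda>x y. E (b (Ei x) (Ei y)))"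
proof -
  interpret lieA s1 A b by fact
  interpret b2: bil s2 "E ` A" "\<lambda>x y. E (b (Ei x) (Ei y))" by (rule bil_tr) unfold_locales
  show ?thesis
  proof unfold_locales
    show "E (b (Ei x) (Ei x)) = 0" if "x \<in> E ` A" for x using that by (simp add: alt)
    show "E (b (Ei x) (Ei (E (b (Ei y) (Ei z))))) + E (b (Ei y) (Ei (E (b (Ei z) (Ei x))))) +
      E (b (Ei z) (Ei (E (b (Ei x) (Ei y))))) = 0" if "x \<in> E ` A" "y \<in> E ` A" "z \<in> E ` A" for x y z
      using that jac[of "Ei x" "Ei y" "Ei z"] by (simp del: E_add add: E_add[symmetric])
  qed
qed

lemma tri_tr: assumes "triA s1 A l r p" shows "triA s2 (E ` A) (\<lambda>x y. E (l (Ei x) (Ei y)))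
   (\<lambda>x y. E (r (Ei x) (Ei y))) (\<lambda>x y. E (p (Ei x) (Ei y)))"
proof -
  interpret triA s1 A l r p by fact
  have bb: "bil s1 A l" "bil s1 A r" "bil s1 A p" using assms by (simp_all add: triA_def)
  show ?thesis
  proof (intro triA.intro triA_axioms.intro ballI conjI bil_tr bb)
    fix a b assume ab: "a \<in> E ` A" "b \<in> E ` A"
    show "E (r (Ei a) (Ei b)) = - E (l (Ei b) (Ei a))" using ab by (simp add: rl)
    show "E (p (Ei a) (Ei b)) = - E (p (Ei b) (Ei a))" using ab pa[of "Ei a" "Ei b"] by simp
  next
    fix x1 x2 x3 assume x: "x1 \<in> E ` A" "x2 \<in> E ` A" "x3 \<in> E ` A"
    show "E (l (Ei (E (l (Ei x1) (Ei x2)))) (Ei x3)) - E (l (Ei x1) (Ei (E (l (Ei x2) (Ei x3))))) +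
       E (l (Ei x2) (Ei (E (l (Ei x1) (Ei x3))))) = 0"
      using x arg_cong[OF ax1[of "Ei x1" "Ei x2" "Ei x3"], of E] by simp
    show "E (l (Ei (E (p (Ei x1) (Ei x2)))) (Ei x3)) = E (l (Ei (E (l (Ei x1) (Ei x2)))) (Ei x3))"
      using x by (metis Ei_E Ei_in Pb.bV Lb.bV ax2)
    show "E (p (Ei (E (l (Ei x1) (Ei x2)))) (Ei x3)) - E (l (Ei x1) (Ei (E (p (Ei x2) (Ei x3))))) -
       E (p (Ei (E (l (Ei x1) (Ei x3)))) (Ei x2)) = 0"
      using x arg_cong[OF ax3[of "Ei x1" "Ei x2" "Ei x3"], of E] by simp
    show "E (p (Ei (E (p (Ei x1) (Ei x2)))) (Ei x3)) + E (p (Ei (E (p (Ei x2) (Ei x3)))) (Ei x1)) +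
       E (p (Ei (E (p (Ei x3) (Ei x1)))) (Ei x2)) = 0"
      using x arg_cong[OF ax4[of "Ei x1" "Ei x2" "Ei x3"], of E] by simp
  qed
qed

lemma tri_hom_E: "triA s1 A l r p \<Longrightarrow> tri_hom s1 A l r p s2 (E ` A) (\<lambda>x y. E (l (Ei x) (Ei y)))
   (\<lambda>x y. E (r (Ei x) (Ei y))) (\<lambda>x y. E (p (Ei x) (Ei y))) E"
  using lin by (auto simp: tri_hom_def)

lemma lie_hom_E: "lie_hom s1 A b s2 (E ` A) (\<lambda>x y. E (b (Ei x) (Ei y))) E"
  using lin by (auto simp: lie_hom_def)

lemma tri_hom_Ei: "triA s1 A l r p \<Longrightarrow> tri_hom s2 (E ` A) (\<lambda>x y. E (l (Ei x) (Ei y)))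
   (\<lambda>x y. E (r (Ei x) (Ei y))) (\<lambda>x y. E (p (Ei x) (Ei y))) s1 A l r p Ei"
  using lin2 by (auto simp: tri_hom_def triA_def bil.bV)

lemma lie_hom_Ei: "bil s1 A b \<Longrightarrow> lie_hom s2 (E ` A) (\<lambda>x y. E (b (Ei x) (Ei y))) s1 A b Ei"
  using lin2 by (auto simp: lie_hom_def bil.bV)
end

lemma tri_hom_comp: "tri_hom s1 A l r p s2 B l2 r2 p2 f \<Longrightarrow> tri_hom s2 B l2 r2 p2 s3 C l3 r3 p3 g \<Longrightarrow>
   tri_hom s1 A l r p s3 C l3 r3 p3 (g \<circ> f)"
  unfolding tri_hom_def lin_on_def by (simp add: closed_on_def)

lemma lie_hom_comp: "lie_hom s1 A l s2 B l2 f \<Longrightarrow> lie_hom s2 B l2 s3 C l3 g \<Longrightarrow>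
   lie_hom s1 A l s3 C l3 (g \<circ> f)"
  by (auto simp: lie_hom_def lin_on_def)

lemma h5: "(a::'a::ab_group_add) - b - c = 0 \<Longrightarrow> a - b = c" by simp

lemma bilinear_on_mono: "bilinear_on s V b \<Longrightarrow> S \<subseteq> V \<Longrightarrow> bilinear_on s S b"
  unfolding bilinear_on_def by (meson subsetD)

lemma bil_sub: assumes "bil s V b" "S \<subseteq> V" "module.subspace s S" "closed_on S b" shows "bil s S b"
proof -
  interpret bil s V b by fact
  show ?thesis
    by (intro bil.intro vsub.intro bil_axioms.intro vsub_axioms.intro vector_space_axioms assms(3,4)
        bilinear_on_mono[OF bil assms(2)])
qed

lemma lieA_sub: assumes "lieA s V b" "S \<subseteq> V" "module.subspace s S" "closed_on S b" shows "lieA s S b"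
proof -
  interpret lieA s V b by fact
  have "bil s V b" by unfold_locales
  show ?thesis
    by (intro lieA.intro lieA_axioms.intro bil_sub[OF \<open>bil s V b\<close> assms(2-4)])
      (use assms(2) in \<open>auto intro: alt jac\<close>)
qed

lemma triA_sub: assumes "triA s V l r p" "S \<subseteq> V" "module.subspace s S" "closed_on S l"
   "closed_on S r" "closed_on S p" shows "triA s S l r p"
proof -
  interpret triA s V l r p by fact
  have b: "bil s V l" "bil s V r" "bil s V p" using assms(1) by (simp_all add: triA_def)
  show ?thesis
    by (intro triA.intro triA_axioms.intro bil_sub[OF b(1) assms(2,3,4)] bil_sub[OF b(2) assms(2,3,5)]
        bil_sub[OF b(3) assms(2,3,6)] ballI conjI)
      (use assms(2) in \<open>auto intro: rl pa ax1 ax2 ax3[THEN h5] ax4\<close>)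
qed

lemma lie_hom_mono: "lie_hom s1 A b1 s2 M b2 h \<Longrightarrow> M \<subseteq> M' \<Longrightarrow> lie_hom s1 A b1 s2 M' b2 h"
  by (auto simp: lie_hom_def)

lemma tri_hom_mono: "tri_hom s1 A l r p s2 M l2 r2 p2 h \<Longrightarrow> M \<subseteq> M' \<Longrightarrow> tri_hom s1 A l r p s2 M' l2 r2 p2 h"
  by (auto simp: tri_hom_def)

lemma lie_hom_id: "lie_hom s A b s A b id"
  by (auto simp: lie_hom_def lin_on_def)

lemma tri_hom_id: "tri_hom s A l r p s A l r p id"
  by (auto simp: tri_hom_def lin_on_def)

locale setting =
  fixes sL :: "'k::field \<Rightarrow> 'l::ab_group_add \<Rightarrow> 'l"
    and L :: "'l set" and bL :: "'l \<Rightarrow> 'l \<Rightarrow> 'l"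
    and sU :: "'k \<Rightarrow> 'u::ab_group_add \<Rightarrow> 'u" and U :: "'u set"
    and l r p :: "'u \<Rightarrow> 'u \<Rightarrow> 'u" and i :: "'l \<Rightarrow> 'u"
    and sF :: "'k \<Rightarrow> 'f::ab_group_add \<Rightarrow> 'f" and F :: "'f set" and bF :: "'f \<Rightarrow> 'f \<Rightarrow> 'f"
    and jdot j :: "'l \<Rightarrow> 'f"
  assumes two: "(2::'k) \<noteq> 0"
    and univ: "is_univ_env_tri sL L bL sU U l r p i"
    and fp: "is_free_product sL L bL sF F bF jdot j"
begin

lemma Lg: "lieA sL L bL" using univ by (simp add: is_univ_env_tri_def lieA_iff)
lemma Ug: "triA sU U l r p" using univ by (simp add: is_univ_env_tri_def triA_iff)
lemma Fg: "lieA sF F bF" using fp by (simp add: is_free_product_def lieA_iff)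
sublocale Lg: lieA sL L bL by (rule Lg)
sublocale Ug: triA sU U l r p by (rule Ug)
sublocale Fg: lieA sF F bF by (rule Fg)

lemma i_hom: "lie_hom sL L bL sU U p i" using univ by (simp add: is_univ_env_tri_def)
lemma jd_hom: "lie_hom sL L bL sF F bF jdot" using fp by (simp add: is_free_product_def)
lemma j_hom: "lie_hom sL L bL sF F bF j" using fp by (simp add: is_free_product_def)

lemma i_in[simp,intro]: "x \<in> L \<Longrightarrow> i x \<in> U" using i_hom by (simp add: lie_hom_def)
lemma i_add[simp]: "x \<in> L \<Longrightarrow> y \<in> L \<Longrightarrow> i (x + y) = i x + i y" using i_hom by (simp add: lie_hom_def lin_on_def)
lemma i_sc[simp]: "x \<in> L \<Longrightarrow> i (sL c x) = sU c (i x)" using i_hom by (simp add: lie_hom_def lin_on_def)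
lemma i_br[simp]: "x \<in> L \<Longrightarrow> y \<in> L \<Longrightarrow> i (bL x y) = p (i x) (i y)" using i_hom by (simp add: lie_hom_def)
lemma i_0[simp]: "i 0 = 0" using i_add[of 0 0] by simp

lemma jd_in[simp,intro]: "x \<in> L \<Longrightarrow> jdot x \<in> F" using jd_hom by (simp add: lie_hom_def)
lemma jd_br[simp]: "x \<in> L \<Longrightarrow> y \<in> L \<Longrightarrow> jdot (bL x y) = bF (jdot x) (jdot y)" using jd_hom by (simp add: lie_hom_def)
lemma j_in[simp,intro]: "x \<in> L \<Longrightarrow> j x \<in> F" using j_hom by (simp add: lie_hom_def)
lemma j_br[simp]: "x \<in> L \<Longrightarrow> y \<in> L \<Longrightarrow> j (bL x y) = bF (j x) (j y)" using j_hom by (simp add: lie_hom_def)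

lemma cop_ex_f:
  fixes M :: "'f set"
  assumes "lieA sF M bM" "lie_hom sL L bL sF M bM g1" "lie_hom sL L bL sF M bM g2"
  shows "\<exists>h. lie_hom sF F bF sF M bM h \<and> (\<forall>x\<in>L. h (jdot x) = g1 x \<and> h (j x) = g2 x)"
proof -
  have c: "coprod_into sL L bL sF F bF jdot j sF" using fp by (simp add: is_free_product_def)
  have P: "lie_alg sF M bM \<and> lie_hom sL L bL sF M bM g1 \<and> lie_hom sL L bL sF M bM g2"
    using assms by (simp add: lieA_iff)
  show ?thesis using c[unfolded coprod_into_def, rule_format, OF P] by (rule conjunct1)
qed

lemma cop_ex_big:
  fixes M :: "('l, 'k) big set" and sM
  assumes "lieA sM M bM" "lie_hom sL L bL sM M bM g1" "lie_hom sL L bL sM M bM g2"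
  shows "\<exists>h. lie_hom sF F bF sM M bM h \<and> (\<forall>x\<in>L. h (jdot x) = g1 x \<and> h (j x) = g2 x)"
proof -
  have c: "coprod_into sL L bL sF F bF jdot j sM" using fp by (simp add: is_free_product_def)
  have P: "lie_alg sM M bM \<and> lie_hom sL L bL sM M bM g1 \<and> lie_hom sL L bL sM M bM g2"
    using assms by (simp add: lieA_iff)
  show ?thesis using c[unfolded coprod_into_def, rule_format, OF P] by (rule conjunct1)
qed

lemma cop_unique:
  assumes h: "lie_hom sF F bF sF F bF h" and h': "lie_hom sF F bF sF F bF h'"
    and eq: "\<And>x. x \<in> L \<Longrightarrow> h (jdot x) = h' (jdot x) \<and> h (j x) = h' (j x)" and u: "u \<in> F"
  shows "h u = h' u"
proof -
  have c: "coprod_into sL L bL sF F bF jdot j sF" using fp by (simp add: is_free_product_def)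
  have g1: "lie_hom sL L bL sF F bF (h \<circ> jdot)" by (rule lie_hom_comp[OF jd_hom h])
  have g2: "lie_hom sL L bL sF F bF (h \<circ> j)" by (rule lie_hom_comp[OF j_hom h])
  have P: "lie_alg sF F bF \<and> lie_hom sL L bL sF F bF (h \<circ> jdot) \<and> lie_hom sL L bL sF F bF (h \<circ> j)"
    using Fg g1 g2 by (simp add: lieA_iff)
  note Q = c[unfolded coprod_into_def, rule_format, OF P, THEN conjunct2, rule_format]
  have e1: "\<forall>x\<in>L. h (jdot x) = (h \<circ> jdot) x \<and> h (j x) = (h \<circ> j) x" by simp
  have e2: "\<forall>x\<in>L. h' (jdot x) = (h \<circ> jdot) x \<and> h' (j x) = (h \<circ> j) x" using eq by simp
  show ?thesis by (rule Q[OF conjI[OF h conjI[OF e1 conjI[OF h' e2]]] u])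
qed

lemma gen_F:
  assumes S: "S \<subseteq> F" "Fg.subspace S" "closed_on S bF" "jdot ` L \<subseteq> S" "j ` L \<subseteq> S"
  shows "F \<subseteq> S"
proof
  fix u assume u: "u \<in> F"
  have lS: "lieA sF S bF" by (rule lieA_sub[OF Fg S(1-3)])
  have "lie_hom sL L bL sF S bF jdot" using jd_hom S(4) by (auto simp: lie_hom_def)
  moreover have "lie_hom sL L bL sF S bF j" using j_hom S(5) by (auto simp: lie_hom_def)
  ultimately obtain h where h: "lie_hom sF F bF sF S bF h" "\<forall>x\<in>L. h (jdot x) = jdot x \<and> h (j x) = j x"
    using cop_ex_f[OF lS] by blast
  have "h u = id u"
    by (rule cop_unique[OF lie_hom_mono[OF h(1) S(1)] lie_hom_id]) (use h(2) u in auto)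
  then show "u \<in> S" using h(1) u by (auto simp: lie_hom_def)
qed

end

context setting begin

lemma tri_ex_big:
  fixes A :: "('l, 'k) big set" and sA
  assumes "triA sA A l' r' p'" "lie_hom sL L bL sA A p' f"
  shows "\<exists>g. tri_hom sU U l r p sA A l' r' p' g \<and> (\<forall>x\<in>L. g (i x) = f x)"
proof -
  have c: "tri_univ_into sL L bL sU U l r p i sA" using univ by (simp add: is_univ_env_tri_def)
  have P: "lie_tri sA A l' r' p' \<and> lie_hom sL L bL sA A p' f" using assms by (simp add: triA_iff)
  show ?thesis using c[unfolded tri_univ_into_def, rule_format, OF P] by (rule conjunct1)
qed

lemma tri_ex_u:
  fixes A :: "'u set" and sA
  assumes "triA sA A l' r' p'" "lie_hom sL L bL sA A p' f"
  shows "\<exists>g. tri_hom sU U l r p sA A l' r' p' g \<and> (\<forall>x\<in>L. g (i x) = f x)"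
proof -
  have c: "tri_univ_into sL L bL sU U l r p i sA" using univ by (simp add: is_univ_env_tri_def)
  have P: "lie_tri sA A l' r' p' \<and> lie_hom sL L bL sA A p' f" using assms by (simp add: triA_iff)
  show ?thesis using c[unfolded tri_univ_into_def, rule_format, OF P] by (rule conjunct1)
qed

lemma tri_unique_U:
  assumes g: "tri_hom sU U l r p sU U l r p g" and eq: "\<And>x. x \<in> L \<Longrightarrow> g (i x) = i x" and u: "u \<in> U"
  shows "g u = u"
proof -
  have c: "tri_univ_into sL L bL sU U l r p i sU" using univ by (simp add: is_univ_env_tri_def)
  have P: "lie_tri sU U l r p \<and> lie_hom sL L bL sU U p i" using Ug i_hom by (simp add: triA_iff)
  note Q = c[unfolded tri_univ_into_def, rule_format, OF P, THEN conjunct2, rule_format]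
  have e1: "\<forall>x\<in>L. g (i x) = i x" using eq by simp
  have e2: "\<forall>x\<in>L. id (i x) = i x" by simp
  have "g u = id u" by (rule Q[OF conjI[OF g conjI[OF e1 conjI[OF tri_hom_id e2]]] u])
  then show ?thesis by simp
qed

lemma gen_U:
  assumes T: "T \<subseteq> U" "Ug.Lb.subspace T" "closed_on T l" "closed_on T r" "closed_on T p" "i ` L \<subseteq> T"
  shows "U \<subseteq> T"
proof
  fix u assume u: "u \<in> U"
  have tT: "triA sU T l r p" by (rule triA_sub[OF Ug T(1-5)])
  have "lie_hom sL L bL sU T p i" using i_hom T(6) by (auto simp: lie_hom_def)
  then obtain g where g: "tri_hom sU U l r p sU T l r p g" "\<forall>x\<in>L. g (i x) = i x"
    using tri_ex_u[OF tT] by blast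
  have "g u = u" by (rule tri_unique_U[OF tri_hom_mono[OF g(1) T(1)]]) (use g(2) u in auto)
  then show "u \<in> T" using g(1) u by (metis tri_hom_def)
qed

definition sig where "sig = (SOME h. lie_hom sF F bF sF F bF h \<and> (\<forall>x\<in>L. h (jdot x) = j x \<and> h (j x) = j x))"

lemma sig_prop: "lie_hom sF F bF sF F bF sig \<and> (\<forall>x\<in>L. sig (jdot x) = j x \<and> sig (j x) = j x)"
proof -
  have "lie_hom sL L bL sF F bF j" by (rule j_hom)
  from cop_ex_f[OF Fg this this] show ?thesis unfolding sig_def by (rule someI_ex)
qed

lemma sig_in[simp,intro]: "x \<in> F \<Longrightarrow> sig x \<in> F" using sig_prop by (simp add: lie_hom_def)
lemma sig_add[simp]: "x \<in> F \<Longrightarrow> y \<in> F \<Longrightarrow> sig (x + y) = sig x + sig y" using sig_prop by (simp add: lie_hom_def lin_on_def)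
lemma sig_sc[simp]: "x \<in> F \<Longrightarrow> sig (sF c x) = sF c (sig x)" using sig_prop by (simp add: lie_hom_def lin_on_def)
lemma sig_br[simp]: "x \<in> F \<Longrightarrow> y \<in> F \<Longrightarrow> sig (bF x y) = bF (sig x) (sig y)" using sig_prop by (simp add: lie_hom_def)
lemma sig_jd[simp]: "x \<in> L \<Longrightarrow> sig (jdot x) = j x" using sig_prop by simp
lemma sig_j[simp]: "x \<in> L \<Longrightarrow> sig (j x) = j x" using sig_prop by simp
lemma sig_idem[simp]: "x \<in> F \<Longrightarrow> sig (sig x) = sig x"
proof -
  assume x: "x \<in> F"
  have "(sig \<circ> sig) x = sig x"
    by (rule cop_unique[OF lie_hom_comp[OF sig_prop[THEN conjunct1] sig_prop[THEN conjunct1]]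
        sig_prop[THEN conjunct1]]) (use x in auto)
  then show ?thesis by simp
qed

definition Iset where "Iset = lie_ideal_gen sF F bF (jdot ` L)"

lemma I_min: "Fg.subspace J \<Longrightarrow> J \<subseteq> F \<Longrightarrow> jdot ` L \<subseteq> J \<Longrightarrow> (\<forall>x\<in>F. \<forall>y\<in>J. bF x y \<in> J) \<Longrightarrow> Iset \<subseteq> J"
  unfolding Iset_def lie_ideal_gen_def by blast

lemma I_sub: "Iset \<subseteq> F"
  by (rule I_min) (auto simp: Fg.sub)

lemma I_gen: "jdot ` L \<subseteq> Iset"
  unfolding Iset_def lie_ideal_gen_def by blast

lemma I_ideal: "x \<in> F \<Longrightarrow> y \<in> Iset \<Longrightarrow> bF x y \<in> Iset"
  unfolding Iset_def lie_ideal_gen_def by blast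

lemma I_subspace: "Fg.subspace Iset"
  unfolding Iset_def lie_ideal_gen_def by (rule Fg.subspace_Inter) blast

lemma I_F[simp,intro]: "x \<in> Iset \<Longrightarrow> x \<in> F" using I_sub by blast

lemma I_vsub: "vsub sF Iset" by (intro vsub.intro vsub_axioms.intro I_subspace) unfold_locales
interpretation Iv: vsub sF Iset by (rule I_vsub)

definition "lI x y = bF (sig x) y"
definition "rI x y = - bF (sig y) x"

lemma tri_I: "triA sF Iset lI rI bF"
proof (intro triA.intro triA_axioms.intro bil.intro bil_axioms.intro ballI conjI I_vsub)
  show "bilinear_on sF Iset lI" by (auto simp: bilinear_on_def lI_def)
  show "closed_on Iset lI" by (auto simp: closed_on_def lI_def I_ideal)
  show "bilinear_on sF Iset rI" by (auto simp: bilinear_on_def rI_def)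
  show "closed_on Iset rI" by (auto simp: closed_on_def rI_def I_ideal)
  show "bilinear_on sF Iset bF" by (auto simp: bilinear_on_def)
  show "closed_on Iset bF" by (auto simp: closed_on_def I_ideal)
  fix a b assume ab: "a \<in> Iset" "b \<in> Iset"
  show "rI a b = - lI b a" by (simp add: rI_def lI_def)
  show "bF a b = - bF b a" using ab by (intro Fg.anti) auto
next
  fix x1 x2 x3 assume x: "x1 \<in> Iset" "x2 \<in> Iset" "x3 \<in> Iset"
  then have y: "x1 \<in> F" "x2 \<in> F" "x3 \<in> F" by auto
  show "lI (lI x1 x2) x3 - lI x1 (lI x2 x3) + lI x2 (lI x1 x3) = 0"
    using y by (simp add: lI_def Fg.jac2)
  show "lI (bF x1 x2) x3 = lI (lI x1 x2) x3" using y by (simp add: lI_def)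
  have e1: "bF (bF (sig x1) x2) x3 = bF (sig x1) (bF x2 x3) - bF x2 (bF (sig x1) x3)"
    using y by (simp add: Fg.jac2)
  have e2: "bF (bF (sig x1) x3) x2 = - bF x2 (bF (sig x1) x3)"
    using y by (simp add: Fg.anti[of "bF (sig x1) x3" x2])
  show "bF (lI x1 x2) x3 - lI x1 (bF x2 x3) - bF (lI x1 x3) x2 = 0"
    unfolding lI_def e1 e2 by simp
  have f1: "bF (bF x1 x2) x3 = - bF x3 (bF x1 x2)" using y by (simp add: Fg.anti[of "bF x1 x2" x3])
  have f2: "bF (bF x2 x3) x1 = - bF x1 (bF x2 x3)" using y by (simp add: Fg.anti[of "bF x2 x3" x1])
  have f3: "bF (bF x3 x1) x2 = - bF x2 (bF x3 x1)" using y by (simp add: Fg.anti[of "bF x3 x1" x2])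
  have j: "bF x3 (bF x1 x2) + bF x1 (bF x2 x3) + bF x2 (bF x3 x1) = 0" using Fg.jac[OF y(3) y(1) y(2)] .
  show "bF (bF x1 x2) x3 + bF (bF x2 x3) x1 + bF (bF x3 x1) x2 = 0"
    unfolding f1 f2 f3 using j by (metis add.inverse_neutral minus_add_distrib)
qed

end

fun evalT :: "('x \<Rightarrow> 'a) \<Rightarrow> ('x \<Rightarrow> 'a) \<Rightarrow> (nat \<Rightarrow> 'a \<Rightarrow> 'a \<Rightarrow> 'a) \<Rightarrow> ('x + 'x) btree \<Rightarrow> 'a" where
  "evalT f g op (Leaf (Inl x)) = f x"
| "evalT f g op (Leaf (Inr x)) = g x"
| "evalT f g op (Node n t1 t2) = op n (evalT f g op t1) (evalT f g op t2)"

fun okT :: "'x set \<Rightarrow> ('x + 'x) btree \<Rightarrow> bool" where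
  "okT L (Leaf (Inl x)) = (x \<in> L)"
| "okT L (Leaf (Inr x)) = (x \<in> L)"
| "okT L (Node n t1 t2) = (okT L t1 \<and> okT L t2)"

lemma (in bil) span_closed1:
  assumes G: "G \<subseteq> V" and cl: "\<And>x y. x \<in> G \<Longrightarrow> y \<in> G \<Longrightarrow> b x y \<in> span G"
    and x: "x \<in> G" and y: "y \<in> span G"
  shows "b x y \<in> span G"
proof -
  have sV: "span G \<subseteq> V" using span_minimal[OF G sub] .
  have xV: "x \<in> V" using x G by auto
  from y have "y \<in> span G \<and> b x y \<in> span G"
  proof (induction rule: span_induct_alt)
    case base then show ?case using xV by (auto simp: span_zero)
  next
    case (step c z w)
    have zV: "z \<in> V" and wV: "w \<in> V" using step G sV by auto
    have "b x (s c z + w) = s c (b x z) + b x w" using xV zV wV by simp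
    then show ?case using step cl[OF x step(1)] by (auto intro!: span_add span_scale intro: span_base)
  qed
  then show ?thesis by simp
qed

lemma (in bil) span_closed:
  assumes G: "G \<subseteq> V" and cl: "\<And>x y. x \<in> G \<Longrightarrow> y \<in> G \<Longrightarrow> b x y \<in> span G"
    and x: "x \<in> span G" and y: "y \<in> span G"
  shows "b x y \<in> span G"
proof -
  have sV: "span G \<subseteq> V" using span_minimal[OF G sub] .
  have yV: "y \<in> V" using y sV by auto
  from x have "x \<in> span G \<and> b x y \<in> span G"
  proof (induction rule: span_induct_alt)
    case base then show ?case using yV by (auto simp: span_zero)
  next
    case (step c z w)
    have zV: "z \<in> V" and wV: "w \<in> V" using step G sV by auto
    have "b (s c z + w) y = s c (b z y) + b w y" using yV zV wV by simp
    then show ?case using step span_closed1[OF G cl step(1) y] by (auto intro!: span_add span_scale intro: span_base)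
  qed
  then show ?thesis by simp
qed

context setting begin

definition "evF = evalT jdot j (\<lambda>n. bF)"
definition "evU = evalT i i (\<lambda>n. if n = 0 then l else if n = 1 then r else p)"
definition "TLs = {t. okT L t}"

lemma evF_in: "okT L t \<Longrightarrow> evF t \<in> F"
  unfolding evF_def
proof (induction t)
  case (Leaf x) then show ?case by (cases x) auto
qed auto

lemma evU_in: "okT L t \<Longrightarrow> evU t \<in> U"
  unfolding evU_def
proof (induction t)
  case (Leaf x) then show ?case by (cases x) auto
qed auto

lemma F_span: "F \<subseteq> Fg.span (evF ` TLs)"
proof (rule gen_F)
  have G: "evF ` TLs \<subseteq> F" using evF_in by (auto simp: TLs_def)
  show "Fg.span (evF ` TLs) \<subseteq> F" by (rule Fg.span_minimal[OF G Fg.sub])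
  show "Fg.subspace (Fg.span (evF ` TLs))" by simp
  show "closed_on (Fg.span (evF ` TLs)) bF"
    unfolding closed_on_def
  proof (intro ballI, rule Fg.span_closed[OF G])
    fix x y assume "x \<in> evF ` TLs" "y \<in> evF ` TLs"
    then obtain t1 t2 where "okT L t1" "okT L t2" "x = evF t1" "y = evF t2" by (auto simp: TLs_def)
    then have "bF x y = evF (Node 0 t1 t2)" "Node 0 t1 t2 \<in> TLs" by (auto simp: evF_def TLs_def)
    then show "bF x y \<in> Fg.span (evF ` TLs)" by (auto intro: Fg.span_base)
  qed
  show "jdot ` L \<subseteq> Fg.span (evF ` TLs)"
  proof
    fix y assume "y \<in> jdot ` L"
    then obtain x where "x \<in> L" "y = evF (Leaf (Inl x))" by (auto simp: evF_def)
    then show "y \<in> Fg.span (evF ` TLs)" by (auto intro!: Fg.span_base simp: TLs_def)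
  qed
  show "j ` L \<subseteq> Fg.span (evF ` TLs)"
  proof
    fix y assume "y \<in> j ` L"
    then obtain x where "x \<in> L" "y = evF (Leaf (Inr x))" by (auto simp: evF_def)
    then show "y \<in> Fg.span (evF ` TLs)" by (auto intro!: Fg.span_base simp: TLs_def)
  qed
qed

lemma U_span: "U \<subseteq> Ug.Lb.span (evU ` TLs)"
proof (rule gen_U)
  have G: "evU ` TLs \<subseteq> U" using evU_in by (auto simp: TLs_def)
  show "Ug.Lb.span (evU ` TLs) \<subseteq> U" by (rule Ug.Lb.span_minimal[OF G Ug.Lb.sub])
  show "Ug.Lb.subspace (Ug.Lb.span (evU ` TLs))" by simp
  show "closed_on (Ug.Lb.span (evU ` TLs)) l"
    unfolding closed_on_def
  proof (intro ballI, rule Ug.Lb.span_closed[OF G])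
    fix x y assume "x \<in> evU ` TLs" "y \<in> evU ` TLs"
    then obtain t1 t2 where "okT L t1" "okT L t2" "x = evU t1" "y = evU t2" by (auto simp: TLs_def)
    then have "l x y = evU (Node 0 t1 t2)" "Node 0 t1 t2 \<in> TLs" by (auto simp: evU_def TLs_def)
    then show "l x y \<in> Ug.Lb.span (evU ` TLs)" by (auto intro: Ug.Lb.span_base)
  qed
  show "closed_on (Ug.Lb.span (evU ` TLs)) r"
    unfolding closed_on_def
  proof (intro ballI, rule Ug.Rb.span_closed[OF G])
    fix x y assume "x \<in> evU ` TLs" "y \<in> evU ` TLs"
    then obtain t1 t2 where "okT L t1" "okT L t2" "x = evU t1" "y = evU t2" by (auto simp: TLs_def)
    then have "r x y = evU (Node 1 t1 t2)" "Node 1 t1 t2 \<in> TLs" by (auto simp: evU_def TLs_def)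
    then show "r x y \<in> Ug.Lb.span (evU ` TLs)" by (auto intro: Ug.Lb.span_base)
  qed
  show "closed_on (Ug.Lb.span (evU ` TLs)) p"
    unfolding closed_on_def
  proof (intro ballI, rule Ug.Pb.span_closed[OF G])
    fix x y assume "x \<in> evU ` TLs" "y \<in> evU ` TLs"
    then obtain t1 t2 where "okT L t1" "okT L t2" "x = evU t1" "y = evU t2" by (auto simp: TLs_def)
    then have "p x y = evU (Node 2 t1 t2)" "Node 2 t1 t2 \<in> TLs" by (auto simp: evU_def TLs_def)
    then show "p x y \<in> Ug.Lb.span (evU ` TLs)" by (auto intro: Ug.Lb.span_base)
  qed
  show "i ` L \<subseteq> Ug.Lb.span (evU ` TLs)"
  proof
    fix y assume "y \<in> i ` L"
    then obtain x where "x \<in> L" "y = evU (Leaf (Inl x))" by (auto simp: evU_def)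
    then show "y \<in> Ug.Lb.span (evU ` TLs)" by (auto intro!: Ug.Lb.span_base simp: TLs_def)
  qed
qed

end

context setting begin

lemma jd_add[simp]: "x \<in> L \<Longrightarrow> y \<in> L \<Longrightarrow> jdot (x + y) = jdot x + jdot y" using jd_hom by (simp add: lie_hom_def lin_on_def)
lemma jd_sc[simp]: "x \<in> L \<Longrightarrow> jdot (sL c x) = sF c (jdot x)" using jd_hom by (simp add: lie_hom_def lin_on_def)
lemma j_add[simp]: "x \<in> L \<Longrightarrow> y \<in> L \<Longrightarrow> j (x + y) = j x + j y" using j_hom by (simp add: lie_hom_def lin_on_def)
lemma j_sc[simp]: "x \<in> L \<Longrightarrow> j (sL c x) = sF c (j x)" using j_hom by (simp add: lie_hom_def lin_on_def)
lemma jd_I[simp,intro]: "x \<in> L \<Longrightarrow> jdot x \<in> Iset" using I_gen by blast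

lemma phi_ex: "\<exists>\<phi>. tri_hom sU U l r p sF Iset lI rI bF \<phi> \<and> (\<forall>x\<in>L. \<phi> (i x) = jdot x)"
proof -
  define bs where "bs = (\<lambda>(c::'k) (f::('l, 'k) big) x. c * f x)"
  have "Iset \<subseteq> Fg.span (evF ` TLs)" using I_sub F_span by blast
  from emb_exists[OF Fg.vector_space_axioms this] obtain E :: "'f \<Rightarrow> ('l, 'k) big"
    where E: "lin_on sF bs Iset E" "inj_on E Iset" unfolding bs_def by blast
  interpret iso sF Iset bs E
    by (intro iso.intro iso_axioms.intro I_vsub E) (unfold bs_def, rule vs_fun)
  let ?l = "\<lambda>x y. E (lI (Ei x) (Ei y))" and ?r = "\<lambda>x y. E (rI (Ei x) (Ei y))"
    and ?p = "\<lambda>x y. E (bF (Ei x) (Ei y))"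
  have T: "triA bs (E ` Iset) ?l ?r ?p" by (rule tri_tr[OF tri_I])
  have H: "lie_hom sL L bL bs (E ` Iset) ?p (E \<circ> jdot)"
    unfolding lie_hom_def lin_on_def by auto
  obtain g where g: "tri_hom sU U l r p bs (E ` Iset) ?l ?r ?p g" "\<forall>x\<in>L. g (i x) = (E \<circ> jdot) x"
    using tri_ex_big[OF T H] by blast
  have "tri_hom sU U l r p sF Iset lI rI bF (Ei \<circ> g)"
    by (rule tri_hom_comp[OF g(1) tri_hom_Ei[OF tri_I]])
  moreover have "\<forall>x\<in>L. (Ei \<circ> g) (i x) = jdot x" using g(2) by simp
  ultimately show ?thesis by blast
qed

end

context setting begin
context
  fixes phi :: "'u \<Rightarrow> 'f"
  assumes phi_hom: "tri_hom sU U l r p sF Iset lI rI bF phi"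
    and phi_i: "\<And>x. x \<in> L \<Longrightarrow> phi (i x) = jdot x"
begin

lemma phi_in[simp,intro]: "u \<in> U \<Longrightarrow> phi u \<in> Iset" using phi_hom by (simp add: tri_hom_def)
lemma phi_add[simp]: "u \<in> U \<Longrightarrow> v \<in> U \<Longrightarrow> phi (u + v) = phi u + phi v" using phi_hom by (simp add: tri_hom_def lin_on_def)
lemma phi_sc[simp]: "u \<in> U \<Longrightarrow> phi (sU c u) = sF c (phi u)" using phi_hom by (simp add: tri_hom_def lin_on_def)
lemma phi_l: "u \<in> U \<Longrightarrow> v \<in> U \<Longrightarrow> phi (l u v) = bF (sig (phi u)) (phi v)" using phi_hom by (simp add: tri_hom_def lI_def)
lemma phi_p: "u \<in> U \<Longrightarrow> v \<in> U \<Longrightarrow> phi (p u v) = bF (phi u) (phi v)" using phi_hom by (simp add: tri_hom_def)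
lemma phi_0[simp]: "phi 0 = 0" using phi_add[of 0 0] by simp

lemma W_add: "x \<in> phi ` U \<Longrightarrow> y \<in> phi ` U \<Longrightarrow> x + y \<in> phi ` U"
  by (auto simp del: phi_add simp: phi_add[symmetric])
lemma W_sc: "x \<in> phi ` U \<Longrightarrow> sF c x \<in> phi ` U"
  by (auto simp del: phi_sc simp: phi_sc[symmetric])
lemma W_0: "0 \<in> phi ` U" using phi_0 Ug.Lb.V0 by (metis image_eqI)
lemma W_neg: "x \<in> phi ` U \<Longrightarrow> - x \<in> phi ` U"
  using W_sc[of x "-1"] Fg.scale_minus_left[of 1 x] by simp
lemma W_diff: "x \<in> phi ` U \<Longrightarrow> y \<in> phi ` U \<Longrightarrow> x - y \<in> phi ` U"
  using W_add[of x "-y"] W_neg[of y] by simp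
lemma W_sub: "Fg.subspace (phi ` U)"
  unfolding Fg.subspace_def using W_0 W_add W_sc by blast

lemma ideal_W: "F \<subseteq> {g\<in>F. \<forall>u\<in>U. bF g (phi u) \<in> phi ` U}"
proof (rule gen_F)
  let ?S = "{g\<in>F. \<forall>u\<in>U. bF g (phi u) \<in> phi ` U}"
  show "?S \<subseteq> F" by blast
  show "Fg.subspace ?S"
    unfolding Fg.subspace_def
  proof (intro conjI ballI allI)
    show "0 \<in> ?S" using W_0 by auto
    fix x y c assume x: "x \<in> ?S" and y: "y \<in> ?S"
    then show "x + y \<in> ?S" by (auto intro!: W_add)
    show "sF c x \<in> ?S" using x by (auto intro!: W_sc)
  qed
  show "closed_on ?S bF"
    unfolding closed_on_def
  proof (intro ballI)
    fix x y assume x: "x \<in> ?S" and y: "y \<in> ?S"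
    show "bF x y \<in> ?S"
    proof (intro CollectI conjI ballI)
      show "bF x y \<in> F" using x y by auto
      fix u assume u: "u \<in> U"
      obtain v where v: "v \<in> U" "bF y (phi u) = phi v" using y u by blast
      obtain w where w: "w \<in> U" "bF x (phi u) = phi w" using x u by blast
      have "bF (bF x y) (phi u) = bF x (phi v) - bF y (phi w)"
        using x y u v w by (simp add: Fg.jac2)
      then show "bF (bF x y) (phi u) \<in> phi ` U" using x y v w by (auto intro!: W_diff)
    qed
  qed
  show "jdot ` L \<subseteq> ?S"
  proof (intro subsetI)
    fix z assume "z \<in> jdot ` L"
    then obtain x where x: "x \<in> L" "z = jdot x" by blast
    show "z \<in> ?S"
    proof (intro CollectI conjI ballI)
      show "z \<in> F" using x by simp
      fix u assume u: "u \<in> U"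
      have "bF (jdot x) (phi u) = phi (p (i x) u)" using x u by (simp add: phi_p phi_i)
      then show "bF z (phi u) \<in> phi ` U" using x u by auto
    qed
  qed
  show "j ` L \<subseteq> ?S"
  proof (intro subsetI)
    fix z assume "z \<in> j ` L"
    then obtain x where x: "x \<in> L" "z = j x" by blast
    show "z \<in> ?S"
    proof (intro CollectI conjI ballI)
      show "z \<in> F" using x by simp
      fix u assume u: "u \<in> U"
      have "bF (j x) (phi u) = phi (l (i x) u)" using x u by (simp add: phi_l phi_i)
      then show "bF z (phi u) \<in> phi ` U" using x u by auto
    qed
  qed
qed

lemma phi_surj: "phi ` U = Iset"
proof
  show "phi ` U \<subseteq> Iset" by auto
  show "Iset \<subseteq> phi ` U"
  proof (rule I_min[OF W_sub])
    show "phi ` U \<subseteq> F" by auto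
    show "jdot ` L \<subseteq> phi ` U" using phi_i by (auto intro!: image_eqI[of _ phi "i _"])
    show "\<forall>x\<in>F. \<forall>y\<in>phi ` U. bF x y \<in> phi ` U" using ideal_W by blast
  qed
qed

end
end

context setting begin

definition "sP c x = (sU c (fst x), sL c (snd x))"
definition "bM x y = (p (fst x) (fst y) + l (i (snd x)) (fst y) - l (i (snd y)) (fst x), bL (snd x) (snd y))"

lemma vsP: "vector_space sP"
  by unfold_locales
    (auto simp: sP_def Ug.Lb.scale_right_distrib Ug.Lb.scale_left_distrib Lg.scale_right_distrib Lg.scale_left_distrib)

lemma subM: "module.subspace sP (U \<times> L)"
  unfolding module.subspace_def[OF vsP[unfolded module_iff_vector_space[symmetric]]]
  by (auto simp: sP_def zero_prod_def)

lemma p_alt: "a \<in> U \<Longrightarrow> p a a = 0"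
proof -
  assume a: "a \<in> U"
  have "p a a = - p a a" using Ug.pa[OF a a] .
  then have "p a a + p a a = 0" by (metis add.right_inverse)
  moreover have "sU (1 + 1) (p a a) = p a a + p a a" by (simp only: Ug.Lb.scale_left_distrib Ug.Lb.scale_one)
  ultimately have "sU (1 + 1) (p a a) = 0" by simp
  moreover have "(1 + 1 :: 'k) \<noteq> 0" using two by simp
  ultimately show ?thesis using Ug.Lb.scale_eq_0_iff by blast
qed

lemma D_br: "b \<in> L \<Longrightarrow> b' \<in> L \<Longrightarrow> c \<in> U \<Longrightarrow>
  l (i (bL b b')) c = l (i b) (l (i b') c) - l (i b') (l (i b) c)"
  by (simp add: Ug.ax2 Ug.ax1')

lemma pjac: "a \<in> U \<Longrightarrow> a' \<in> U \<Longrightarrow> a'' \<in> U \<Longrightarrow> p a (p a' a'') + p a' (p a'' a) + p a'' (p a a') = 0"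
proof -
  assume u: "a \<in> U" "a' \<in> U" "a'' \<in> U"
  have e1: "p a (p a' a'') = - p (p a' a'') a" using u by (intro Ug.pa) auto
  have e2: "p a' (p a'' a) = - p (p a'' a) a'" using u by (intro Ug.pa) auto
  have e3: "p a'' (p a a') = - p (p a a') a''" using u by (intro Ug.pa) auto
  have "p (p a' a'') a + p (p a'' a) a' + p (p a a') a'' = 0" using Ug.ax4[of a' a'' a] u by simp
  then show ?thesis unfolding e1 e2 e3 by (metis add.inverse_neutral minus_add_distrib)
qed

lemma exp1:
  assumes u: "a \<in> U" "a' \<in> U" "a'' \<in> U" and b: "b \<in> L" "b' \<in> L" "b'' \<in> L"
  shows "fst (bM (a, b) (bM (a', b') (a'', b''))) =
    p a (p a' a'') + p a (l (i b') a'') - p a (l (i b'') a') - p a'' (l (i b) a') + p a' (l (i b) a'')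
    + l (i b) (l (i b') a'') - l (i b) (l (i b'') a') - l (i b') (l (i b'') a) + l (i b'') (l (i b') a)"
proof -
  have d: "l (i b) (p a' a'') = p a' (l (i b) a'') - p a'' (l (i b) a')"
  proof -
    have "l (i b) (p a' a'') = p (l (i b) a') a'' - p (l (i b) a'') a'" using u b by (simp add: Ug.der)
    moreover have "p (l (i b) a') a'' = - p a'' (l (i b) a')" using u b by (intro Ug.pa) auto
    moreover have "p (l (i b) a'') a' = - p a' (l (i b) a'')" using u b by (intro Ug.pa) auto
    ultimately show ?thesis by simp
  qed
  show ?thesis using u b by (simp add: bM_def d Ug.ax2 Ug.ax1' algebra_simps)
qed

lemma lieM: "lieA sP (U \<times> L) bM"
proof (intro lieA.intro lieA_axioms.intro bil.intro bil_axioms.intro vsub.intro vsub_axioms.intro vsP subM)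
  show "bilinear_on sP (U \<times> L) bM"
    unfolding bilinear_on_def by (auto simp: bM_def sP_def algebra_simps)
  show "closed_on (U \<times> L) bM"
    unfolding closed_on_def by (auto simp: bM_def)
  fix x assume "x \<in> U \<times> L"
  then show "bM x x = 0" by (auto simp: bM_def p_alt zero_prod_def Lg.alt)
next
  fix x y z assume "x \<in> U \<times> L" "y \<in> U \<times> L" "z \<in> U \<times> L"
  then obtain a b a' b' a'' b'' where xyz: "x = (a, b)" "y = (a', b')" "z = (a'', b'')"
    and u: "a \<in> U" "a' \<in> U" "a'' \<in> U" and bb: "b \<in> L" "b' \<in> L" "b'' \<in> L" by auto
  have f: "fst (bM x (bM y z) + bM y (bM z x) + bM z (bM x y)) = 0"
    unfolding xyz fst_add exp1[OF u bb] exp1[OF u(2,3,1) bb(2,3,1)] exp1[OF u(3,1,2) bb(3,1,2)]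
    using pjac[OF u] by (simp add: algebra_simps)
  have g: "snd (bM x (bM y z) + bM y (bM z x) + bM z (bM x y)) = 0"
    unfolding xyz by (simp add: bM_def Lg.jac bb)
  show "bM x (bM y z) + bM y (bM z x) + bM z (bM x y) = 0"
    using f g by (simp add: prod_eq_iff)
qed

end

context setting begin

definition "evM t = (case t of Leaf (Inr x) \<Rightarrow> (0, x) | _ \<Rightarrow> (evU t, 0))"

lemma evM_cover: "okT L t \<Longrightarrow> \<exists>t'. okT L t' \<and> evM t' = (evU t, 0)"
proof (cases t)
  case (Leaf x) assume ok: "okT L t"
  show ?thesis
  proof (cases x)
    case (Inl y) then show ?thesis using ok Leaf by (intro exI[of _ t]) (auto simp: evM_def)
  next
    case (Inr y) then show ?thesis using ok Leaf
      by (intro exI[of _ "Leaf (Inl y)"]) (auto simp: evM_def evU_def)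
  qed
next
  case (Node n t1 t2) assume ok: "okT L t"
  then show ?thesis using Node by (intro exI[of _ t]) (auto simp: evM_def)
qed

interpretation PM: vector_space sP by (rule vsP)

lemma M_span: "U \<times> L \<subseteq> PM.span (evM ` TLs)"
proof clarify
  fix u b assume u: "u \<in> U" and b: "b \<in> L"
  have "(0, b) = evM (Leaf (Inr b))" by (simp add: evM_def)
  then have 1: "(0, b) \<in> PM.span (evM ` TLs)" using b by (auto intro!: PM.span_base simp: TLs_def)
  have "u \<in> Ug.Lb.span (evU ` TLs)" using u U_span by blast
  then have 2: "(u, 0) \<in> PM.span (evM ` TLs)"
  proof (induction rule: Ug.Lb.span_induct_alt)
    case base then show ?case using PM.span_zero by (simp add: zero_prod_def)
  next
    case (step c z w)
    then obtain t where t: "okT L t" "z = evU t" by (auto simp: TLs_def)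
    obtain t' where t': "okT L t'" "evM t' = (z, 0)" using evM_cover[OF t(1)] t(2) by auto
    have "(z, 0) \<in> evM ` TLs" using t' unfolding TLs_def by (metis image_eqI mem_Collect_eq)
    then have zs: "(z, 0) \<in> PM.span (evM ` TLs)" by (rule PM.span_base)
    have "(sU c z + w, 0::'l) = sP c (z, 0) + (w, 0)" by (simp add: sP_def)
    then show ?case using zs step(2) by (auto intro!: PM.span_add PM.span_scale)
  qed
  have "(u, b) = (u, 0) + (0, b)" by simp
  then show "(u, b) \<in> PM.span (evM ` TLs)" using 1 2 by (metis PM.span_add)
qed

lemma psi_ex: "\<exists>psi. lie_hom sF F bF sP (U \<times> L) bM psi \<and> (\<forall>x\<in>L. psi (jdot x) = (i x, 0) \<and> psi (j x) = (0, x))"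
proof -
  define bs where "bs = (\<lambda>(c::'k) (f::('l, 'k) big) x. c * f x)"
  from emb_exists[OF vsP M_span] obtain E :: "'u \<times> 'l \<Rightarrow> ('l, 'k) big"
    where E: "lin_on sP bs (U \<times> L) E" "inj_on E (U \<times> L)" unfolding bs_def by blast
  have vM: "vsub sP (U \<times> L)" by (intro vsub.intro vsub_axioms.intro vsP subM)
  interpret iso sP "U \<times> L" bs E
    by (intro iso.intro iso_axioms.intro vM E) (unfold bs_def, rule vs_fun)
  let ?b = "\<lambda>x y. E (bM (Ei x) (Ei y))"
  have T: "lieA bs (E ` (U \<times> L)) ?b" by (rule lie_tr[OF lieM])
  have H1: "lie_hom sL L bL bs (E ` (U \<times> L)) ?b (\<lambda>x. E (i x, 0))"
    unfolding lie_hom_def lin_on_def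
  proof (intro conjI ballI allI)
    fix x y assume x: "x \<in> L" and y: "y \<in> L"
    show "E (i x, 0) \<in> E ` (U \<times> L)" using x by auto
    have "E ((i x, 0) + (i y, 0)) = E (i x, 0) + E (i y, 0)" using x y by (intro E_add) auto
    then show "E (i (x + y), 0) = E (i x, 0) + E (i y, 0)" using x y by simp
    have "bM (i x, 0) (i y, 0) = (i (bL x y), 0)" using x y by (simp add: bM_def)
    then show "E (i (bL x y), 0) = E (bM (Ei (E (i x, 0))) (Ei (E (i y, 0))))" using x y by simp
  next
    fix c x assume x: "x \<in> L"
    have "(i (sL c x), 0::'l) = sP c (i x, 0)" using x by (simp add: sP_def)
    then show "E (i (sL c x), 0) = bs c (E (i x, 0))" using x by simp
  qed
  have H2: "lie_hom sL L bL bs (E ` (U \<times> L)) ?b (\<lambda>x. E (0, x))"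
    unfolding lie_hom_def lin_on_def
  proof (intro conjI ballI allI)
    fix x y assume x: "x \<in> L" and y: "y \<in> L"
    show "E (0, x) \<in> E ` (U \<times> L)" using x by auto
    have "E ((0::'u, x) + (0, y)) = E (0, x) + E (0, y)" using x y by (intro E_add) auto
    then show "E (0, x + y) = E (0, x) + E (0, y)" using x y by simp
    have "bM (0, x) (0, y) = (0, bL x y)" using x y by (simp add: bM_def)
    then show "E (0, bL x y) = E (bM (Ei (E (0, x))) (Ei (E (0, y))))" using x y by simp
  next
    fix c x assume x: "x \<in> L"
    have "(0::'u, sL c x) = sP c (0, x)" using x by (simp add: sP_def)
    then show "E (0, sL c x) = bs c (E (0, x))" using x by simp
  qed
  obtain h where h: "lie_hom sF F bF bs (E ` (U \<times> L)) ?b h"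
    "\<forall>x\<in>L. h (jdot x) = E (i x, 0) \<and> h (j x) = E (0, x)"
    using cop_ex_big[OF T H1 H2] by blast
  have bilM: "bil sP (U \<times> L) bM" using lieM by (simp add: lieA_def)
  have "lie_hom sF F bF sP (U \<times> L) bM (Ei \<circ> h)"
    by (rule lie_hom_comp[OF h(1) lie_hom_Ei[OF bilM]])
  moreover have "\<forall>x\<in>L. (Ei \<circ> h) (jdot x) = (i x, 0) \<and> (Ei \<circ> h) (j x) = (0, x)" using h(2) by simp
  ultimately show ?thesis by blast
qed

end

context setting begin
lemma sig_0[simp]: "sig 0 = 0" using sig_add[of 0 0] by simp

context
  fixes phi :: "'u \<Rightarrow> 'f" and psi :: "'f \<Rightarrow> 'u \<times> 'l"
  assumes phi_hom: "tri_hom sU U l r p sF Iset lI rI bF phi"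
    and phi_i: "\<And>x. x \<in> L \<Longrightarrow> phi (i x) = jdot x"
    and psi_hom: "lie_hom sF F bF sP (U \<times> L) bM psi"
    and psi_jd: "\<And>x. x \<in> L \<Longrightarrow> psi (jdot x) = (i x, 0)"
    and psi_j: "\<And>x. x \<in> L \<Longrightarrow> psi (j x) = (0, x)"
begin

lemma psi_in: "g \<in> F \<Longrightarrow> psi g \<in> U \<times> L" using psi_hom by (simp add: lie_hom_def)
lemma psi_fst[simp,intro]: "g \<in> F \<Longrightarrow> fst (psi g) \<in> U" using psi_in by (auto simp: mem_Times_iff)
lemma psi_snd[simp,intro]: "g \<in> F \<Longrightarrow> snd (psi g) \<in> L" using psi_in by (auto simp: mem_Times_iff)
lemma psi_add[simp]: "g \<in> F \<Longrightarrow> h \<in> F \<Longrightarrow> psi (g + h) = psi g + psi h" using psi_hom by (simp add: lie_hom_def lin_on_def)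
lemma psi_sc[simp]: "g \<in> F \<Longrightarrow> psi (sF c g) = sP c (psi g)" using psi_hom by (simp add: lie_hom_def lin_on_def)
lemma psi_br: "g \<in> F \<Longrightarrow> h \<in> F \<Longrightarrow> psi (bF g h) = bM (psi g) (psi h)" using psi_hom by (simp add: lie_hom_def)
lemma psi_0[simp]: "psi 0 = 0" using psi_add[of 0 0] by simp

lemma snd_psi_I: "g \<in> Iset \<Longrightarrow> snd (psi g) = 0"
proof -
  let ?J = "{g\<in>F. snd (psi g) = 0}"
  have "Iset \<subseteq> ?J"
  proof (rule I_min)
    show "Fg.subspace ?J" unfolding Fg.subspace_def by (auto simp: sP_def)
    show "?J \<subseteq> F" by blast
    show "jdot ` L \<subseteq> ?J" by (auto simp: psi_jd)
    show "\<forall>x\<in>F. \<forall>y\<in>?J. bF x y \<in> ?J" by (auto simp: psi_br bM_def)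
  qed
  then show "g \<in> Iset \<Longrightarrow> snd (psi g) = 0" by blast
qed

lemma fst_psi_sig: "g \<in> F \<Longrightarrow> fst (psi (sig g)) = 0"
proof -
  let ?S = "{g\<in>F. fst (psi (sig g)) = 0}"
  have "F \<subseteq> ?S"
  proof (rule gen_F)
    show "Fg.subspace ?S" unfolding Fg.subspace_def by (auto simp: sP_def)
    show "?S \<subseteq> F" by blast
    show "closed_on ?S bF" unfolding closed_on_def by (auto simp: psi_br bM_def)
    show "jdot ` L \<subseteq> ?S" by (auto simp: psi_j)
    show "j ` L \<subseteq> ?S" by (auto simp: psi_j)
  qed
  then show "g \<in> F \<Longrightarrow> fst (psi (sig g)) = 0" by blast
qed

definition "pi g = snd (psi (sig g))"

lemma pi_L[simp,intro]: "g \<in> F \<Longrightarrow> pi g \<in> L" by (simp add: pi_def)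

lemma claimC: "g \<in> F \<Longrightarrow> c \<in> U \<Longrightarrow> l (fst (psi g)) c + l (i (snd (psi g))) c = l (i (pi g)) c"
proof -
  let ?S = "{g\<in>F. \<forall>c\<in>U. l (fst (psi g)) c + l (i (snd (psi g))) c = l (i (pi g)) c}"
  have "F \<subseteq> ?S"
  proof (rule gen_F)
    show "?S \<subseteq> F" by blast
    show "Fg.subspace ?S"
      unfolding Fg.subspace_def
    proof (intro conjI ballI allI)
      show "0 \<in> ?S" by (auto simp: pi_def zero_prod_def)
      fix x y c assume x: "x \<in> ?S" and y: "y \<in> ?S"
      show "x + y \<in> ?S"
      proof (intro CollectI conjI ballI)
        show "x + y \<in> F" using x y by auto
        fix d assume d: "d \<in> U"
        have hx: "l (fst (psi x)) d + l (i (snd (psi x))) d = l (i (pi x)) d" using x d by blast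
        have hy: "l (fst (psi y)) d + l (i (snd (psi y))) d = l (i (pi y)) d" using y d by blast
        have "pi (x + y) = pi x + pi y" using x y by (simp add: pi_def)
        then show "l (fst (psi (x + y))) d + l (i (snd (psi (x + y)))) d = l (i (pi (x + y))) d"
          using x y d hx[symmetric] hy[symmetric] by (simp add: algebra_simps)
      qed
      show "sF c x \<in> ?S"
      proof (intro CollectI conjI ballI)
        show "sF c x \<in> F" using x by auto
        fix d assume d: "d \<in> U"
        have hx: "l (fst (psi x)) d + l (i (snd (psi x))) d = l (i (pi x)) d" using x d by blast
        have "pi (sF c x) = sL c (pi x)" using x by (simp add: pi_def sP_def)
        moreover have "sU c (l (fst (psi x)) d) + sU c (l (i (snd (psi x))) d) = sU c (l (i (pi x)) d)"
          using hx by (metis Ug.Lb.scale_right_distrib)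
        ultimately show "l (fst (psi (sF c x))) d + l (i (snd (psi (sF c x)))) d = l (i (pi (sF c x))) d"
          using x d by (simp add: sP_def)
      qed
    qed
    show "closed_on ?S bF"
      unfolding closed_on_def
    proof (intro ballI)
      fix g h assume g: "g \<in> ?S" and h: "h \<in> ?S"
      show "bF g h \<in> ?S"
      proof (intro CollectI conjI ballI)
        show "bF g h \<in> F" using g h by auto
        fix c assume c: "c \<in> U"
        obtain a b where ab: "psi g = (a, b)" by fastforce
        obtain a' b' where ab': "psi h = (a', b')" by fastforce
        have gF: "g \<in> F" and hF: "h \<in> F" using g h by auto
        have a: "a \<in> U" "b \<in> L" using psi_in[OF gF] ab by auto
        have a': "a' \<in> U" "b' \<in> L" using psi_in[OF hF] ab' by auto
        define q where "q = pi g"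
        define q' where "q' = pi h"
        have q: "q \<in> L" "q' \<in> L" using gF hF by (auto simp: q_def q'_def)
        have Hg: "\<And>d. d \<in> U \<Longrightarrow> l (i q) d = l a d + l (i b) d" using g ab by (auto simp: q_def)
        have Hh: "\<And>d. d \<in> U \<Longrightarrow> l (i q') d = l a' d + l (i b') d" using h ab' by (auto simp: q'_def)
        have pibr: "pi (bF g h) = bL q q'"
          using gF hF fst_psi_sig[OF gF] fst_psi_sig[OF hF]
          by (simp add: pi_def q_def q'_def psi_br bM_def)
        have psibr: "psi (bF g h) = (p a a' + l (i b) a' - l (i b') a, bL b b')"
          using gF hF ab ab' by (simp add: psi_br bM_def)
        have R: "l (i (bL q q')) c = l (i q) (l (i q') c) - l (i q') (l (i q) c)"
          using q c by (simp add: Ug.ax2 Ug.ax1')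
        have R2: "l (i q) (l (i q') c) = l a (l a' c) + l a (l (i b') c) + l (i b) (l a' c) + l (i b) (l (i b') c)"
          using Hg[of "l (i q') c"] Hh[of c] a a' q c by simp
        have R3: "l (i q') (l (i q) c) = l a' (l a c) + l a' (l (i b) c) + l (i b') (l a c) + l (i b') (l (i b) c)"
          using Hh[of "l (i q) c"] Hg[of c] a a' q c by simp
        have "l (fst (psi (bF g h))) c + l (i (snd (psi (bF g h)))) c =
          l a (l a' c) - l a' (l a c) + (l (i b) (l a' c) - l a' (l (i b) c))
          - (l (i b') (l a c) - l a (l (i b') c)) + (l (i b) (l (i b') c) - l (i b') (l (i b) c))"
          unfolding psibr using a a' c by (simp add: Ug.ax2 Ug.ax1')
        also have "\<dots> = l (i (pi (bF g h))) c"
          unfolding pibr R R2 R3 by (simp add: algebra_simps)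
        finally show "l (fst (psi (bF g h))) c + l (i (snd (psi (bF g h)))) c = l (i (pi (bF g h))) c" .
      qed
    qed
    show "jdot ` L \<subseteq> ?S" by (auto simp: psi_jd psi_j pi_def)
    show "j ` L \<subseteq> ?S" by (auto simp: psi_j pi_def)
  qed
  then show "g \<in> F \<Longrightarrow> c \<in> U \<Longrightarrow> l (fst (psi g)) c + l (i (snd (psi g))) c = l (i (pi g)) c" by blast
qed

lemma ph_in[simp,intro]: "u \<in> U \<Longrightarrow> phi u \<in> Iset" using phi_hom unfolding tri_hom_def by blast
lemma ph_F[simp,intro]: "u \<in> U \<Longrightarrow> phi u \<in> F" using ph_in I_F by blast
lemma ph_add[simp]: "u \<in> U \<Longrightarrow> v \<in> U \<Longrightarrow> phi (u + v) = phi u + phi v" using phi_hom unfolding tri_hom_def lin_on_def by blast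
lemma ph_sc[simp]: "u \<in> U \<Longrightarrow> phi (sU c u) = sF c (phi u)" using phi_hom unfolding tri_hom_def lin_on_def by blast
lemma ph_l: "u \<in> U \<Longrightarrow> v \<in> U \<Longrightarrow> phi (l u v) = bF (sig (phi u)) (phi v)" using phi_hom unfolding tri_hom_def lI_def by blast
lemma ph_p: "u \<in> U \<Longrightarrow> v \<in> U \<Longrightarrow> phi (p u v) = bF (phi u) (phi v)" using phi_hom unfolding tri_hom_def by blast
lemma psi_neg: "g \<in> F \<Longrightarrow> psi (- g) = - psi g"
  using psi_add[of g "-g"] by (simp add: eq_neg_iff_add_eq_0 add.commute)

lemma theta_l: "u \<in> U \<Longrightarrow> v \<in> U \<Longrightarrow> fst (psi (phi (l u v))) = l (fst (psi (phi u))) (fst (psi (phi v)))"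
proof -
  assume u: "u \<in> U" and v: "v \<in> U"
  have C: "l (fst (psi (phi u))) (fst (psi (phi v))) + l (i (snd (psi (phi u)))) (fst (psi (phi v)))
     = l (i (pi (phi u))) (fst (psi (phi v)))" using claimC u v by auto
  have s0: "snd (psi (phi u)) = 0" "snd (psi (phi v)) = 0" using snd_psi_I u v by auto
  have f0: "fst (psi (sig (phi u))) = 0" using fst_psi_sig u by auto
  have "fst (psi (phi (l u v))) = l (i (pi (phi u))) (fst (psi (phi v)))"
    using u v s0 f0 by (simp add: ph_l psi_br bM_def pi_def)
  then show ?thesis using C s0 u v by simp
qed

lemma theta_p: "u \<in> U \<Longrightarrow> v \<in> U \<Longrightarrow> fst (psi (phi (p u v))) = p (fst (psi (phi u))) (fst (psi (phi v)))"
proof -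
  assume u: "u \<in> U" and v: "v \<in> U"
  have s0: "snd (psi (phi u)) = 0" "snd (psi (phi v)) = 0" using snd_psi_I u v by auto
  show ?thesis using u v s0 by (simp add: ph_p psi_br bM_def)
qed

lemma theta_hom: "tri_hom sU U l r p sU U l r p (\<lambda>u. fst (psi (phi u)))"
  unfolding tri_hom_def lin_on_def
proof (intro conjI ballI allI)
  fix u v assume u: "u \<in> U" and v: "v \<in> U"
  show "fst (psi (phi u)) \<in> U" using u by auto
  show "fst (psi (phi (u + v))) = fst (psi (phi u)) + fst (psi (phi v))" using u v by simp
  show "fst (psi (phi (l u v))) = l (fst (psi (phi u))) (fst (psi (phi v)))" by (rule theta_l[OF u v])
  show "fst (psi (phi (p u v))) = p (fst (psi (phi u))) (fst (psi (phi v)))" by (rule theta_p[OF u v])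
  have "phi (r u v) = rI (phi u) (phi v)" using phi_hom u v unfolding tri_hom_def by blast
  then have "phi (r u v) = - phi (l v u)" using u v by (simp add: rI_def ph_l)
  then have "fst (psi (phi (r u v))) = - fst (psi (phi (l v u)))"
    using u v by (simp add: psi_neg)
  then show "fst (psi (phi (r u v))) = r (fst (psi (phi u))) (fst (psi (phi v)))"
    using u v theta_l[OF v u] by (simp add: Ug.rl)
next
  fix c u assume u: "u \<in> U"
  show "fst (psi (phi (sU c u))) = sU c (fst (psi (phi u)))" using u by (simp add: sP_def)
qed

lemma theta_id: "u \<in> U \<Longrightarrow> fst (psi (phi u)) = u"
  by (rule tri_unique_U[OF theta_hom]) (simp add: phi_i psi_jd)

lemma phi_inj: "inj_on phi U"
  by (rule inj_on_inverseI[of _ "\<lambda>v. fst (psi v)"]) (rule theta_id)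

end
end

theorem theorem5p1:
  fixes sL :: "'k::field \<Rightarrow> 'l::ab_group_add \<Rightarrow> 'l"
    and L :: "'l set" and bL :: "'l \<Rightarrow> 'l \<Rightarrow> 'l"
    and sU :: "'k \<Rightarrow> 'u::ab_group_add \<Rightarrow> 'u" and U :: "'u set"
    and l r p :: "'u \<Rightarrow> 'u \<Rightarrow> 'u" and i :: "'l \<Rightarrow> 'u"
    and sF :: "'k \<Rightarrow> 'f::ab_group_add \<Rightarrow> 'f" and F :: "'f set" and bF :: "'f \<Rightarrow> 'f \<Rightarrow> 'f"
    and jdot j :: "'l \<Rightarrow> 'f"
  assumes "(2::'k) \<noteq> 0"
    and "lie_alg sL L bL"
    and "is_univ_env_tri sL L bL sU U l r p i"
    and "is_free_product sL L bL sF F bF jdot j"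
  shows "\<exists>\<phi>. lin_on sU sF U \<phi> \<and> bij_betw \<phi> U (lie_ideal_gen sF F bF (jdot ` L))"
proof -
  interpret S: setting sL L bL sU U l r p i sF F bF jdot j
    using assms(1,3,4) by unfold_locales
  obtain phi where phi: "tri_hom sU U l r p sF S.Iset S.lI S.rI bF phi" "\<forall>x\<in>L. phi (i x) = jdot x"
    using S.phi_ex by blast
  obtain psi where psi: "lie_hom sF F bF S.sP (U \<times> L) S.bM psi"
    "\<forall>x\<in>L. psi (jdot x) = (i x, 0) \<and> psi (j x) = (0, x)"
    using S.psi_ex by blast
  have p1: "\<And>x. x \<in> L \<Longrightarrow> phi (i x) = jdot x" using phi(2) by blast
  have p2: "\<And>x. x \<in> L \<Longrightarrow> psi (jdot x) = (i x, 0)" using psi(2) by blast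
  have p3: "\<And>x. x \<in> L \<Longrightarrow> psi (j x) = (0, x)" using psi(2) by blast
  have inj: "inj_on phi U" by (rule S.phi_inj[OF phi(1) p1 psi(1) p2 p3])
  have surj: "phi ` U = S.Iset" by (rule S.phi_surj[OF phi(1) p1])
  have lin: "lin_on sU sF U phi" using phi(1) unfolding tri_hom_def by blast
  have "bij_betw phi U S.Iset" using inj surj by (simp add: bij_betw_def)
  then show ?thesis using lin unfolding S.Iset_def by blast
qed


end
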